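(* Let $K$ be the irreducible cyclic code of length $n$ over $GF(q)$ with monic irreducible parity-check polynomial $h(x)$ of degree $m$ and order $n\ne q^m-1$. Then the Hamming weight of every codeword of $K$ is a multiple of $d=\gcd(q-1,n)$.
   Context: Let $q>2$ be a prime power. $A_n=GF(q)[x]/(x^n-1)$; Hamming weight of an element = number of nonzero coefficients of its representative of degree $<n$. The order of $h$ is the least $e\ge1$ with $h\mid x^e-1$. $K$ is the ideal of $A_n$ generated by $(x^n-1)/h(x)$. *)

theory Defs
  imports "HOL-Computational_Algebra.Polynomial" "HOL-Library.Cardinality"
begin

definition xn1 :: "nat \<Rightarrow> 'a::comm_ring_1 poly" where
  "xn1 n = monom 1 n - 1"

definition poly_ord :: "'a::comm_ring_1 poly \<Rightarrow> nat" where
  "poly_ord h = (LEAST e. e \<ge> 1 \<and> h dvd xn1 e)"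

definition hamming_weight :: "'a::zero poly \<Rightarrow> nat" where
  "hamming_weight c = card {i. coeff c i \<noteq> 0}"

(* the ideal K of A_n = F[x]/(x^n-1) generated by (x^n-1)/h, each element
   represented by its unique representative of degree < n *)
definition cyclic_code :: "nat \<Rightarrow> 'a::field poly \<Rightarrow> 'a poly set" where
  "cyclic_code n h = {(f * (xn1 n div h)) mod xn1 n | f. True}"

end

theory Submission imports Defs "HOL-Computational_Algebra.Polynomial_Factorial" begin

lemma fermat_fin:
  fixes c :: "'a::{field,finite}"
  assumes "c \<noteq> 0"
  shows "c ^ (CARD('a) - 1) = 1"
proof -
  define S where "S = (UNIV - {0::'a})"
  have fin: "finite S" by simp
  have cardS: "card S = CARD('a) - 1" unfolding S_def by (simp add: card_Diff_singleton)
  have bij: "bij_betw (\<lambda>x. c * x) S S"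
    unfolding S_def using assms
    by (auto simp: bij_betw_def inj_on_def intro!: image_eqI[where x="x / c" for x])
  have "prod id S = prod (\<lambda>x. c * x) S"
    using prod.reindex_bij_betw[OF bij, of id] by simp
  also have "\<dots> = c ^ card S * prod id S" by (simp add: prod.distrib)
  finally have "c ^ card S * prod id S = 1 * prod id S" by simp
  moreover have "prod id S \<noteq> 0" using fin unfolding S_def by simp
  ultimately show ?thesis using cardS by simp
qed

lemma roots_prod_dvd:
  fixes p :: "'a::field poly"
  assumes "finite A" "\<forall>a\<in>A. poly p a = 0"
  shows "(\<Prod>a\<in>A. [:-a,1:]) dvd p"
  using assms
proof (induction A arbitrary: p rule: finite_induct)
  case empty then show ?case by simp
next
  case (insert a A)
  then have "[:-a,1:] dvd p" by (simp add: poly_eq_0_iff_dvd)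
  then obtain q where q: "p = [:-a,1:] * q" by (auto elim: dvdE)
  have "\<forall>b\<in>A. poly q b = 0"
  proof
    fix b assume b: "b \<in> A"
    then have "b \<noteq> a" using insert by auto
    moreover have "poly p b = 0" using insert b by auto
    ultimately show "poly q b = 0" using q by simp
  qed
  then have "(\<Prod>a\<in>A. [:-a,1:]) dvd q" using insert by blast
  then have "[:-a,1:] * (\<Prod>a\<in>A. [:-a,1:]) dvd [:-a,1:] * q" by (rule mult_dvd_mono[OF dvd_refl])
  then show ?case using insert q by (simp only: prod.insert[OF insert.hyps(1,2)])
qed

lemma pcompose_X_pow: "pcompose ([:0,1:] ^ n) r = (r::'a::comm_ring_1 poly) ^ n"
  by (induction n) (simp_all add: pcompose_mult pcompose_pCons pcompose_1)


lemma xpow_prod: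
  assumes "CARD('a::{field,finite}) \<ge> 2"
  shows "\<exists>r0. r0 \<noteq> 0 \<and> ([:0,1:]::'a poly)^(CARD('a)-1) - 1 = (\<Prod>c\<in>UNIV - {0::'a}. [:-c,1:]) * [:r0:]"
proof -
  define Q where "Q = ([:0,1:]::'a poly)^(CARD('a)-1) - 1"
  define P where "P = (\<Prod>c\<in>UNIV - {0::'a}. [:-c,1:])"
  have "P dvd Q" unfolding P_def
    by (rule roots_prod_dvd) (use fermat_fin in \<open>auto simp: Q_def\<close>)
  then obtain r where r: "Q = P * r" by (auto elim: dvdE)
  have degQ: "degree Q = CARD('a) - 1"
    unfolding Q_def using assms using degree_add_eq_left[of "-1::'a poly" "[:0,1:]^(CARD('a)-1)"] degree_linear_power[where a="0::'a" and n="CARD('a)-1"] by simp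
  have "Q \<noteq> 0" using degQ assms by auto
  then have "P \<noteq> 0" "r \<noteq> 0" using r by auto
  have degP: "degree P = CARD('a) - 1"
    unfolding P_def by (subst degree_prod_eq_sum_degree) (auto simp: card_Diff_singleton)
  have "degree Q = degree P + degree r" using r \<open>P \<noteq> 0\<close> \<open>r \<noteq> 0\<close> by (simp add: degree_mult_eq)
  then have "degree r = 0" using degQ degP assms by linarith
  then have "r = [:coeff r 0:]" by (metis degree_0_id)
  then show ?thesis using r \<open>r \<noteq> 0\<close> unfolding Q_def P_def
    by (metis pCons_0_0)
qed


lemma degree_xn1: "n \<ge> 1 \<Longrightarrow> degree (xn1 n :: 'a::field poly) = n"
  unfolding xn1_def using degree_add_eq_left[of "-1::'a poly" "monom 1 n"]
  by (simp add: degree_monom_eq)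

lemma shift_coeff:
  fixes c :: "'a::field poly"
  assumes k: "0 < k" "k \<le> n" and cz: "\<forall>i\<ge>n. coeff c i = 0"
    and dv: "xn1 n dvd (monom 1 k - [:g:]) * c"
  shows "i + k < n \<Longrightarrow> coeff c i = g * coeff c (i+k)"
proof -
  assume ik: "i + k < n"
  obtain t where t: "(monom 1 k - [:g:]) * c = xn1 n * t" using dv by (auto elim: dvdE)
  have tz: "coeff t j = 0" if "j \<ge> k" for j
  proof (cases "c = 0 \<or> t = 0")
    case True
    then show ?thesis
    proof
      assume "c = 0"
      then have "xn1 n * t = 0" using t by simp
      moreover have "xn1 n \<noteq> (0::'a poly)"
      proof
        assume "xn1 n = (0::'a poly)"
        then have "degree (xn1 n :: 'a poly) = 0" by simp
        then show False using degree_xn1[of n, where 'a='a] k by simp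
      qed
      ultimately show ?thesis by simp
    qed simp
  next
    case False
    then have c0: "c \<noteq> 0" and t0: "t \<noteq> 0" by auto
    have dc: "degree c \<le> n - 1" by (rule degree_le) (use cz k in auto)
    have "degree (monom 1 k - [:g:] :: 'a poly) \<le> k"
      by (rule degree_diff_le) (auto simp: degree_monom_le)
    then have "degree ((monom 1 k - [:g:]) * c) \<le> k + (n - 1)"
      using dc degree_mult_le[of "monom 1 k - [:g:]" c] by linarith
    moreover have "degree (xn1 n * t) = n + degree t"
      using t0 degree_xn1[of n] k by (subst degree_mult_eq) auto
    ultimately have "degree t < k" using t k by simp
    then show ?thesis using that by (simp add: coeff_eq_0)
  qed
  have "coeff ((monom 1 k - [:g:]) * c) (i+k) = coeff (xn1 n * t) (i+k)" using t by simp
  then have "coeff c i - g * coeff c (i+k) = - coeff t (i+k)"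
    using ik unfolding xn1_def by (simp add: left_diff_distrib coeff_monom_mult)
  then show ?thesis using tz[of "i+k"] by simp
qed


lemma count_periodic:
  fixes c :: "'a::field poly"
  assumes n: "n = d*k" and k: "0<k" and cz: "\<forall>i\<ge>n. coeff c i = 0" and g: "g \<noteq> 0"
    and sh: "\<And>i. i+k<n \<Longrightarrow> coeff c i = g * coeff c (i+k)"
  shows "hamming_weight c = d * card {a. a<k \<and> coeff c a \<noteq> 0}"
proof -
  have eqv: "coeff c (j*k+a) \<noteq> 0 \<longleftrightarrow> coeff c a \<noteq> 0" if "a<k" "j<d" for a j
    using that
  proof (induction j)
    case 0 then show ?case by simp
  next
    case (Suc j)
    have "j*k+a+k < n" using Suc.prems n
      by (metis add.commute add_less_cancel_left less_eq_Suc_le mult_Suc mult_le_mono1 mult.commute order_less_le_trans)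
    then have "coeff c (j*k+a) = g * coeff c (j*k+a+k)" by (rule sh)
    moreover have "j*k+a+k = Suc j * k + a" by simp
    ultimately show ?case using Suc g by auto
  qed
  let ?f = "\<lambda>(a,j). j*k+a"
  have inj: "inj_on ?f ({a. a<k \<and> coeff c a \<noteq> 0} \<times> {..<d})"
  proof (rule inj_onI, clarsimp)
    fix a j a' j' assume "j*k+a = j'*k+a'" "a<k" "a'<k"
    then have "(j*k+a) mod k = (j'*k+a') mod k" "(j*k+a) div k = (j'*k+a') div k" by simp_all
    then show "a = a' \<and> j = j'" using \<open>a<k\<close> \<open>a'<k\<close> k by simp
  qed
  have im: "{i. coeff c i \<noteq> 0} = ?f ` ({a. a<k \<and> coeff c a \<noteq> 0} \<times> {..<d})"
  proof (rule set_eqI, rule iffI)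
    fix i assume "i \<in> {i. coeff c i \<noteq> 0}"
    then have ci: "coeff c i \<noteq> 0" by simp
    then have "i < n" using cz by (meson not_le)
    then have jd: "i div k < d" using n k by (simp add: less_mult_imp_div_less)
    have ik: "i mod k < k" using k by simp
    have ie: "i = (i div k)*k + i mod k" by simp
    then have "coeff c (i mod k) \<noteq> 0" using eqv[OF ik jd] ci by simp
    then show "i \<in> ?f ` ({a. a<k \<and> coeff c a \<noteq> 0} \<times> {..<d})"
      using jd ik ie by (auto intro!: image_eqI[where x="(i mod k, i div k)"])
  next
    fix i assume "i \<in> ?f ` ({a. a<k \<and> coeff c a \<noteq> 0} \<times> {..<d})"
    then obtain a j where "i = j*k+a" "a<k" "j<d" "coeff c a \<noteq> 0" by auto
    then show "i \<in> {i. coeff c i \<noteq> 0}" using eqv by auto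
  qed
  have "hamming_weight c = card ({a. a<k \<and> coeff c a \<noteq> 0} \<times> {..<d})"
    unfolding hamming_weight_def im by (rule card_image[OF inj])
  also have "\<dots> = d * card {a. a<k \<and> coeff c a \<noteq> 0}" by (simp add: card_cartesian_product)
  finally show ?thesis .
qed


lemma prime_elem_dvd_prodE:
  assumes "prime_elem (p::'b::comm_semiring_1)" "finite A" "p dvd prod f A"
  shows "\<exists>x\<in>A. p dvd f x"
  using assms(2,3)
proof (induction A rule: finite_induct)
  case empty then show ?case using assms(1) by (simp add: prime_elem_not_unit)
next
  case (insert a A)
  then have "p dvd f a * prod f A" by simp
  then have "p dvd f a \<or> p dvd prod f A" using assms(1) by (simp add: prime_elem_dvd_mult_iff)
  then show ?case using insert by auto
qed

theorem corollary6:
  fixes h :: "'a::{field,finite} poly" and n m :: nat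
  assumes "CARD('a) > 2"
    and "lead_coeff h = 1" and "irreducible h" and "degree h = m"
    and "\<exists>e\<ge>1. h dvd xn1 e"
    and "poly_ord h = n"
    and "n \<noteq> CARD('a) ^ m - 1"
  shows "\<forall>c \<in> cyclic_code n h. gcd (CARD('a) - 1) n dvd hamming_weight c"
proof
  fix c assume cK: "c \<in> cyclic_code n h"
  define q where "q = CARD('a)"
  have q2: "q \<ge> 2" using assms(1) q_def by simp
  have "n \<ge> 1 \<and> h dvd xn1 n"
    using LeastI_ex[OF assms(5)] assms(6) unfolding poly_ord_def by simp
  then have n1: "n \<ge> 1" and hdv: "h dvd xn1 n" by auto
  define d where "d = gcd (q-1) n"
  have d0: "d > 0" using n1 d_def by simp
  have ddn: "d dvd n" and ddq: "d dvd q - 1" unfolding d_def by auto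
  define k where "k = n div d"
  have nk: "n = d * k" using ddn k_def by simp
  have k0: "k > 0" using nk n1 by (cases k) auto
  have kn: "k \<le> n" using nk d0 by simp
  obtain e where e: "q - 1 = d * e" using ddq by (auto elim: dvdE)
  define X where "X = ([:0,1:] :: 'a poly)"
  have mon: "monom 1 j = X ^ j" for j unfolding X_def by (simp add: monom_altdef)
  have "xn1 n dvd (X^k)^(q-1) - 1"
  proof -
    have "(X^k)^(q-1) = (X^n)^e" using nk e by (simp add: power_mult[symmetric] mult.commute mult.left_commute)
    then have "(X^k)^(q-1) - 1 = (X^n - 1) * sum ((^) (X^n)) {..<e}" by (simp add: power_diff_1_eq)
    then show ?thesis unfolding xn1_def mon by simp
  qed
  then have h1: "h dvd (X^k)^(q-1) - 1" using hdv by (meson dvd_trans)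
  obtain r0 where r0: "r0 \<noteq> 0" "X^(q-1) - 1 = (\<Prod>c\<in>UNIV - {0::'a}. [:-c,1:]) * [:r0:]"
    using xpow_prod[of] q2 unfolding q_def X_def by auto
  have "pcompose (X^(q-1) - 1) (X^k) = (\<Prod>c\<in>UNIV - {0::'a}. X^k - [:c:]) * [:r0:]"
  proof -
    have lin: "pcompose [:-c,1:] (X^k) = X^k - [:c:]" for c
      by (simp add: pcompose_pCons)
    show ?thesis unfolding r0(2) by (simp only: pcompose_mult pcompose_prod pcompose_const lin)
  qed
  moreover have "pcompose (X^(q-1) - 1) (X^k) = (X^k)^(q-1) - 1"
    unfolding X_def by (simp add: pcompose_diff pcompose_X_pow pcompose_1)
  ultimately have "h dvd (\<Prod>c\<in>UNIV - {0::'a}. X^k - [:c:]) * [:r0:]" using h1 by simp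
  moreover have "is_unit [:r0:]" using r0(1) by (rule is_unit_triv)
  ultimately have "h dvd (\<Prod>c\<in>UNIV - {0::'a}. X^k - [:c:])" using dvd_mult_unit_iff by blast
  moreover have "prime_elem h" using assms(3) by (rule field_poly_irreducible_imp_prime)
  ultimately obtain g where g: "g \<noteq> 0" "h dvd X^k - [:g:]"
    using prime_elem_dvd_prodE[of h "UNIV - {0::'a}"] by auto
  from cK obtain f where c: "c = (f * (xn1 n div h)) mod xn1 n" unfolding cyclic_code_def by auto
  have xh: "xn1 n = h * (xn1 n div h)" using hdv by simp
  obtain u where u: "X^k - [:g:] = h * u" using g(2) by (auto elim: dvdE)
  have "xn1 n dvd (monom 1 k - [:g:]) * c"
  proof -
    define F where "F = f * (xn1 n div h)"
    have cF: "c = F - xn1 n * (F div xn1 n)" unfolding c F_def by (simp add: mod_div_mult_eq[symmetric] algebra_simps)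
    have "(monom 1 k - [:g:]) * c = (h*u) * (F - xn1 n * (F div xn1 n))"
      using cF by (simp add: mon u)
    also have "\<dots> = (u * f) * (h * (xn1 n div h)) - xn1 n * ((h*u) * (F div xn1 n))"
      unfolding F_def by (simp add: algebra_simps)
    finally show ?thesis using xh by (metis dvd_diff dvd_triv_left dvd_triv_right)
  qed
  moreover have cz: "\<forall>i\<ge>n. coeff c i = 0"
  proof (intro allI impI)
    fix i assume "i \<ge> n"
    have "xn1 n \<noteq> (0::'a poly)"
    proof
      assume "xn1 n = (0::'a poly)"
      then have "degree (xn1 n :: 'a poly) = 0" by simp
      then show False using degree_xn1[of n, where 'a='a] n1 by simp
    qed
    then have "c = 0 \<or> degree c < n" unfolding c using degree_mod_less degree_xn1[OF n1] by metis
    then show "coeff c i = 0" using \<open>i \<ge> n\<close> by (auto intro: coeff_eq_0)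
  qed
  ultimately have sh: "\<And>i. i + k < n \<Longrightarrow> coeff c i = g * coeff c (i+k)"
    using shift_coeff[OF k0 kn] by blast
  have "hamming_weight c = d * card {a. a<k \<and> coeff c a \<noteq> 0}"
    by (rule count_periodic[OF nk k0 cz g(1) sh])
  then show "gcd (CARD('a) - 1) n dvd hamming_weight c" unfolding d_def q_def by simp
qed

end
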